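(* Let $(\Gamma,f,\mu)$ be a measured Reeb graph with no boundary vertices. Then the set of totally negative circulation functions on $\Gamma$ is a (possibly empty) open convex polytope in the affine space of all circulation functions on $\Gamma$. In particular, the set of totally negative circulation functions on $\Gamma$ is bounded.
   Context: A Reeb graph $(\Gamma,f)$ is a finite connected oriented graph $\Gamma$ with a continuous function $f\colon\Gamma\to\mathbb{R}$ strictly increasing along each edge in its orientation, all of whose vertices are $1$-valent or $3$-valent ($1$-valent ones being of two types, boundary and non-boundary), such that at each $3$-valent vertex there are either two incoming and one outgoing edge or vice versa. At a $3$-valent vertex $v$ the trunk $e_0$ is the edge alone in its direction and the other two edges $e_1,e_2$ are branches. A measure $\mu$ on $\Gamma$ is log-smooth if it has a smooth non-vanishing density $d\mu/df$ at interior points and $1$-valent vertices, and near each $3$-valent vertex $v$, with $\tilde f=f-f(v)$, there are functions $\psi,\eta_0,\eta_1,\eta_2$ smooth near $0$ with $\psi(0)=0,\psi'(0)\ne0$, $\eta_0+\eta_1+\eta_2=0$, and $\mu([v,x])=\varepsilon_i\psi(\tilde f(x))\ln|\tilde f(x)|+\eta_i(\tilde f(x))$ for $x\in e_i$ near $v$, $\varepsilon_0=2,\varepsilon_1=\varepsilon_2=-1$. A measured Reeb graph is a Reeb graph with a log-smooth measure. Let $V$ be the vertex set. A circulation function on $(\Gamma,f,\mu)$ is a function $\mathfrak{c}\colon\Gamma\setminus V\to\mathbb{R}$, continuous, such that: (i) for every vertex $v$ and edge $e\ni v$, the limit of $\mathfrak{c}(x)$ as $x\to v$ along $e$ exists and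 is finite; (ii) if $x,y$ are interior points of one edge, the edge pointing from $x$ to $y$, then $\mathfrak{c}(y)-\mathfrak{c}(x)=\int_{[x,y]}f\,d\mu$; (iii) at every non-boundary vertex $v$, the sum of the limits of $\mathfrak{c}$ at $v$ along edges pointing into $v$ equals the sum of the limits along edges pointing out of $v$. The set of circulation functions is an affine space (possibly empty). For a $3$-valent vertex $v$ with adjacent edges $e_0,e_1,e_2$ let $c_i(v)$ be the limit of $\mathfrak{c}$ at $v$ along $e_i$; $\mathfrak{c}$ is totally negative if $c_0(v),c_1(v),c_2(v)<0$ for every $3$-valent vertex $v$. *)

theory Defs
  imports "HOL-Analysis.Analysis"
begin

text \<open>
  Since f is continuous and strictly increasing along each
  edge, f restricted to a closed edge is a homeomorphism onto the interval
  [h (src e), h (tgt e)], where h v = f(v) is the value of f at the vertex v.  We therefore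
  identify an interior point of the edge e with the pair (e, t), t in the open interval
  ]h (src e), h (tgt e)[, and f(e,t) = t.
\<close>

definition lo :: "('e \<Rightarrow> 'v) \<Rightarrow> ('v \<Rightarrow> real) \<Rightarrow> 'e \<Rightarrow> real" where
  "lo src h e = h (src e)"

definition hi :: "('e \<Rightarrow> 'v) \<Rightarrow> ('v \<Rightarrow> real) \<Rightarrow> 'e \<Rightarrow> real" where
  "hi tgt h e = h (tgt e)"

definition indeg :: "'e set \<Rightarrow> ('e \<Rightarrow> 'v) \<Rightarrow> 'v \<Rightarrow> nat" where
  "indeg E tgt v = card {e \<in> E. tgt e = v}"

definition outdeg :: "'e set \<Rightarrow> ('e \<Rightarrow> 'v) \<Rightarrow> 'v \<Rightarrow> nat" where
  "outdeg E src v = card {e \<in> E. src e = v}"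

definition adj_edges :: "'e set \<Rightarrow> ('e \<Rightarrow> 'v) \<Rightarrow> ('e \<Rightarrow> 'v) \<Rightarrow> 'v \<Rightarrow> 'e set" where
  "adj_edges E src tgt v = {e \<in> E. src e = v \<or> tgt e = v}"

definition univalent :: "'e set \<Rightarrow> ('e \<Rightarrow> 'v) \<Rightarrow> ('e \<Rightarrow> 'v) \<Rightarrow> 'v \<Rightarrow> bool" where
  "univalent E src tgt v \<longleftrightarrow> indeg E tgt v + outdeg E src v = 1"

definition trivalent :: "'e set \<Rightarrow> ('e \<Rightarrow> 'v) \<Rightarrow> ('e \<Rightarrow> 'v) \<Rightarrow> 'v \<Rightarrow> bool" where
  "trivalent E src tgt v \<longleftrightarrow>
     (indeg E tgt v = 2 \<and> outdeg E src v = 1) \<or> (indeg E tgt v = 1 \<and> outdeg E src v = 2)"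

definition graph_connected :: "'v set \<Rightarrow> 'e set \<Rightarrow> ('e \<Rightarrow> 'v) \<Rightarrow> ('e \<Rightarrow> 'v) \<Rightarrow> bool" where
  "graph_connected V E src tgt \<longleftrightarrow>
     (\<forall>u\<in>V. \<forall>w\<in>V. (u, w) \<in> ({(src e, tgt e) | e. e \<in> E} \<union> {(tgt e, src e) | e. e \<in> E})\<^sup>*)"

definition reeb_graph ::
  "'v set \<Rightarrow> 'e set \<Rightarrow> ('e \<Rightarrow> 'v) \<Rightarrow> ('e \<Rightarrow> 'v) \<Rightarrow> ('v \<Rightarrow> real) \<Rightarrow> 'v set \<Rightarrow> bool" where
  "reeb_graph V E src tgt h B \<longleftrightarrow>
     finite V \<and> finite E \<and> V \<noteq> {} \<and>
     (\<forall>e\<in>E. src e \<in> V \<and> tgt e \<in> V \<and> h (src e) < h (tgt e)) \<and>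
     graph_connected V E src tgt \<and>
     (\<forall>v\<in>V. univalent E src tgt v \<or> trivalent E src tgt v) \<and>
     B \<subseteq> {v \<in> V. univalent E src tgt v}"

definition Cinf_on :: "real set \<Rightarrow> (real \<Rightarrow> real) \<Rightarrow> bool" where
  "Cinf_on S g \<longleftrightarrow> (\<forall>n. ((deriv ^^ n) g) differentiable_on S)"

text \<open>
  The measure mu is encoded by its densities d mu / d f on the open edges:
  rho e t is the density at the point (e,t).  For x = (e,t) on an edge e adjacent to v,
  mu([v,x]) is the integral of rho e between h v and t (log-smooth measures have no atoms).
\<close>
definition mu_from ::
  "('e \<Rightarrow> 'v) \<Rightarrow> ('v \<Rightarrow> real) \<Rightarrow> ('e \<Rightarrow> real \<Rightarrow> real) \<Rightarrow> 'v \<Rightarrow> 'e \<Rightarrow> real \<Rightarrow> real" where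
  "mu_from src h rho v e t =
     (if src e = v then integral {h v..t} (rho e) else integral {t..h v} (rho e))"

definition is_trunk :: "'e set \<Rightarrow> ('e \<Rightarrow> 'v) \<Rightarrow> ('e \<Rightarrow> 'v) \<Rightarrow> 'v \<Rightarrow> 'e \<Rightarrow> bool" where
  "is_trunk E src tgt v e \<longleftrightarrow>
     (tgt e = v \<and> indeg E tgt v = 1) \<or> (src e = v \<and> outdeg E src v = 1)"

definition eps :: "'e set \<Rightarrow> ('e \<Rightarrow> 'v) \<Rightarrow> ('e \<Rightarrow> 'v) \<Rightarrow> 'v \<Rightarrow> 'e \<Rightarrow> real" where
  "eps E src tgt v e = (if is_trunk E src tgt v e then 2 else -1)"

definition log_smooth ::
  "'v set \<Rightarrow> 'e set \<Rightarrow> ('e \<Rightarrow> 'v) \<Rightarrow> ('e \<Rightarrow> 'v) \<Rightarrow> ('v \<Rightarrow> real) \<Rightarrow> ('e \<Rightarrow> real \<Rightarrow> real) \<Rightarrow> bool" where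
  "log_smooth V E src tgt h rho \<longleftrightarrow>
     (\<forall>e\<in>E. Cinf_on {lo src h e<..<hi tgt h e} (rho e) \<and>
             (\<forall>t\<in>{lo src h e<..<hi tgt h e}. rho e t > 0)) \<and>
     (\<forall>v\<in>V. univalent E src tgt v \<longrightarrow>
        (\<forall>e\<in>adj_edges E src tgt v. \<exists>g \<delta>. \<delta> > 0 \<and> Cinf_on (ball (h v) \<delta>) g \<and> g (h v) \<noteq> 0 \<and>
            (\<forall>t\<in>{lo src h e<..<hi tgt h e}. \<bar>t - h v\<bar> < \<delta> \<longrightarrow> rho e t = g t))) \<and>
     (\<forall>v\<in>V. trivalent E src tgt v \<longrightarrow>
        (\<exists>\<psi> \<eta> \<delta>. \<delta> > 0 \<and> Cinf_on (ball 0 \<delta>) \<psi> \<and>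
            (\<forall>e\<in>adj_edges E src tgt v. Cinf_on (ball 0 \<delta>) (\<eta> e)) \<and>
            \<psi> 0 = 0 \<and> deriv \<psi> 0 \<noteq> 0 \<and>
            (\<forall>s\<in>ball 0 \<delta>. (\<Sum>e\<in>adj_edges E src tgt v. \<eta> e s) = 0) \<and>
            (\<forall>e\<in>adj_edges E src tgt v. \<forall>t\<in>{lo src h e<..<hi tgt h e}. \<bar>t - h v\<bar> < \<delta> \<longrightarrow>
               rho e integrable_on closed_segment (h v) t \<and>
               mu_from src h rho v e t =
                 eps E src tgt v e * \<psi> (t - h v) * ln \<bar>t - h v\<bar> + \<eta> e (t - h v))))"

definition lim_src :: "('e \<Rightarrow> 'v) \<Rightarrow> ('v \<Rightarrow> real) \<Rightarrow> ('e \<Rightarrow> real \<Rightarrow> real) \<Rightarrow> 'e \<Rightarrow> real" where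
  "lim_src src h c e = Lim (at_right (lo src h e)) (c e)"

definition lim_tgt :: "('e \<Rightarrow> 'v) \<Rightarrow> ('v \<Rightarrow> real) \<Rightarrow> ('e \<Rightarrow> real \<Rightarrow> real) \<Rightarrow> 'e \<Rightarrow> real" where
  "lim_tgt tgt h c e = Lim (at_left (hi tgt h e)) (c e)"

definition lim_at ::
  "('e \<Rightarrow> 'v) \<Rightarrow> ('e \<Rightarrow> 'v) \<Rightarrow> ('v \<Rightarrow> real) \<Rightarrow> ('e \<Rightarrow> real \<Rightarrow> real) \<Rightarrow> 'v \<Rightarrow> 'e \<Rightarrow> real" where
  "lim_at src tgt h c v e = (if src e = v then lim_src src h c e else lim_tgt tgt h c e)"

text \<open>
  A function on Gamma minus V is represented by c :: 'e => real => real,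
  where c e t is the value at the interior point (e,t); values outside the open edges are
  normalised to 0 (so that c is determined by its values on Gamma minus V).
\<close>
definition circulation ::
  "'v set \<Rightarrow> 'e set \<Rightarrow> ('e \<Rightarrow> 'v) \<Rightarrow> ('e \<Rightarrow> 'v) \<Rightarrow> ('v \<Rightarrow> real) \<Rightarrow> ('e \<Rightarrow> real \<Rightarrow> real)
     \<Rightarrow> 'v set \<Rightarrow> ('e \<Rightarrow> real \<Rightarrow> real) \<Rightarrow> bool" where
  "circulation V E src tgt h rho B c \<longleftrightarrow>
     (\<forall>e t. (e \<notin> E \<or> t \<notin> {lo src h e<..<hi tgt h e}) \<longrightarrow> c e t = 0) \<and>
     (\<forall>e\<in>E. continuous_on {lo src h e<..<hi tgt h e} (c e)) \<and>
     (\<forall>e\<in>E. (\<exists>L. (c e \<longlongrightarrow> L) (at_right (lo src h e))) \<and>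
             (\<exists>L. (c e \<longlongrightarrow> L) (at_left (hi tgt h e)))) \<and>
     (\<forall>e\<in>E. \<forall>s\<in>{lo src h e<..<hi tgt h e}. \<forall>t\<in>{lo src h e<..<hi tgt h e}. s \<le> t \<longrightarrow>
        (\<lambda>\<tau>. \<tau> * rho e \<tau>) integrable_on {s..t} \<and>
        c e t - c e s = integral {s..t} (\<lambda>\<tau>. \<tau> * rho e \<tau>)) \<and>
     (\<forall>v\<in>V - B. (\<Sum>e\<in>{e \<in> E. tgt e = v}. lim_tgt tgt h c e) =
                 (\<Sum>e\<in>{e \<in> E. src e = v}. lim_src src h c e))"

definition totally_negative ::
  "'v set \<Rightarrow> 'e set \<Rightarrow> ('e \<Rightarrow> 'v) \<Rightarrow> ('e \<Rightarrow> 'v) \<Rightarrow> ('v \<Rightarrow> real) \<Rightarrow> ('e \<Rightarrow> real \<Rightarrow> real) \<Rightarrow> bool" where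
  "totally_negative V E src tgt h c \<longleftrightarrow>
     (\<forall>v\<in>V. trivalent E src tgt v \<longrightarrow>
        (\<forall>e\<in>adj_edges E src tgt v. lim_at src tgt h c v e < 0))"

definition affine_functional_on :: "('e \<Rightarrow> real \<Rightarrow> real) set \<Rightarrow> (('e \<Rightarrow> real \<Rightarrow> real) \<Rightarrow> real) \<Rightarrow> bool" where
  "affine_functional_on A l \<longleftrightarrow>
     (\<forall>a\<in>A. \<forall>b\<in>A. \<forall>u::real.
        l (\<lambda>e t. u * a e t + (1 - u) * b e t) = u * l a + (1 - u) * l b)"

definition finite_dim_affine :: "('e \<Rightarrow> real \<Rightarrow> real) set \<Rightarrow> bool" where
  "finite_dim_affine A \<longleftrightarrow>
     (\<exists>F. finite F \<and> F \<subseteq> A \<and>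
        (\<forall>c\<in>A. \<exists>w. sum w F = 1 \<and> c = (\<lambda>e t. \<Sum>g\<in>F. w g * g e t)))"

definition open_convex_polytope_in ::
  "('e \<Rightarrow> real \<Rightarrow> real) set \<Rightarrow> ('e \<Rightarrow> real \<Rightarrow> real) set \<Rightarrow> bool" where
  "open_convex_polytope_in A S \<longleftrightarrow>
     finite_dim_affine A \<and>
     (\<exists>L. finite L \<and> (\<forall>l\<in>L. affine_functional_on A l) \<and>
          S = {c \<in> A. \<forall>l\<in>L. l c > 0}) \<and>
     (\<exists>M. \<forall>c\<in>S. \<forall>e t. \<bar>c e t\<bar> \<le> M)"

end

theory Submission
  imports Defs "HOL-Library.Function_Algebras"
begin


lemma cut_sum_zero:
  fixes d :: "'e \<Rightarrow> real" and h :: "'v \<Rightarrow> real"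
  assumes fV: "finite V" and fE: "finite E"
    and ends: "\<forall>e\<in>E. src e \<in> V \<and> tgt e \<in> V \<and> h (src e) < h (tgt e)"
    and kir: "\<forall>v\<in>V. (\<Sum>e\<in>{e\<in>E. tgt e = v}. d e) = (\<Sum>e\<in>{e\<in>E. src e = v}. d e)"
  shows "(\<Sum>e\<in>{e\<in>E. h (src e) < t \<and> t \<le> h (tgt e)}. d e) = 0"
proof -
  let ?W = "{v\<in>V. h v < t}"
  have fW: "finite ?W" using fV by auto
  have in_eq: "(\<Sum>v\<in>?W. \<Sum>e\<in>{e\<in>E. tgt e = v}. d e) = (\<Sum>e\<in>{e\<in>E. h (tgt e) < t}. d e)"
  proof -
    have "(\<Sum>v\<in>?W. \<Sum>e\<in>{e\<in>E. tgt e = v}. d e) = (\<Sum>v\<in>?W. \<Sum>e\<in>{x. x\<in>{e\<in>E. h (tgt e) < t} \<and> tgt x = v}. d e)"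
      by (rule sum.cong[OF refl], rule arg_cong[where f="sum d"]) auto
    also have "\<dots> = (\<Sum>e\<in>{e\<in>E. h (tgt e) < t}. d e)"
      by (rule sum.group) (use fE fW ends in auto)
    finally show ?thesis .
  qed
  have out_eq: "(\<Sum>v\<in>?W. \<Sum>e\<in>{e\<in>E. src e = v}. d e) = (\<Sum>e\<in>{e\<in>E. h (src e) < t}. d e)"
  proof -
    have "(\<Sum>v\<in>?W. \<Sum>e\<in>{e\<in>E. src e = v}. d e) = (\<Sum>v\<in>?W. \<Sum>e\<in>{x. x\<in>{e\<in>E. h (src e) < t} \<and> src x = v}. d e)"
      by (rule sum.cong[OF refl], rule arg_cong[where f="sum d"]) auto
    also have "\<dots> = (\<Sum>e\<in>{e\<in>E. h (src e) < t}. d e)"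
      by (rule sum.group) (use fE fW ends in auto)
    finally show ?thesis .
  qed
  have "(\<Sum>v\<in>?W. \<Sum>e\<in>{e\<in>E. tgt e = v}. d e) = (\<Sum>v\<in>?W. \<Sum>e\<in>{e\<in>E. src e = v}. d e)"
    using kir by (intro sum.cong[OF refl]) auto
  hence eq: "(\<Sum>e\<in>{e\<in>E. h (tgt e) < t}. d e) = (\<Sum>e\<in>{e\<in>E. h (src e) < t}. d e)"
    using in_eq out_eq by simp
  have "{e\<in>E. h (src e) < t} = {e\<in>E. h (tgt e) < t} \<union> {e\<in>E. h (src e) < t \<and> t \<le> h (tgt e)}"
  proof (intro set_eqI iffI)
    fix e assume "e \<in> {e\<in>E. h (src e) < t}"
    thus "e \<in> {e\<in>E. h (tgt e) < t} \<union> {e\<in>E. h (src e) < t \<and> t \<le> h (tgt e)}" by (cases "h (tgt e) < t") auto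
  next
    fix e assume "e \<in> {e\<in>E. h (tgt e) < t} \<union> {e\<in>E. h (src e) < t \<and> t \<le> h (tgt e)}"
    thus "e \<in> {e\<in>E. h (src e) < t}" using ends by force
  qed
  hence "(\<Sum>e\<in>{e\<in>E. h (src e) < t}. d e) = (\<Sum>e\<in>{e\<in>E. h (tgt e) < t}. d e) + (\<Sum>e\<in>{e\<in>E. h (src e) < t \<and> t \<le> h (tgt e)}. d e)"
  proof -
    assume eqS: "{e\<in>E. h (src e) < t} = {e\<in>E. h (tgt e) < t} \<union> {e\<in>E. h (src e) < t \<and> t \<le> h (tgt e)}"
    show ?thesis unfolding eqS by (rule sum.union_disjoint) (use fE in auto)
  qed
  thus ?thesis using eq by simp
qed

lemma bounded_open_interval:
  fixes g :: "real \<Rightarrow> real"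
  assumes ab: "a < b" and cont: "continuous_on {a<..<b} g"
    and l1: "(g \<longlongrightarrow> L1) (at_right a)" and l2: "(g \<longlongrightarrow> L2) (at_left b)"
  shows "\<exists>B. \<forall>t\<in>{a<..<b}. \<bar>g t\<bar> \<le> B"
proof -
  have "eventually (\<lambda>s. dist (g s) L1 < 1) (at_right a)" using l1 by (simp add: tendsto_iff)
  then obtain b1 where b1: "b1 > a" "\<And>s. s > a \<Longrightarrow> s < b1 \<Longrightarrow> \<bar>g s - L1\<bar> < 1"
    by (auto simp: eventually_at_right_field dist_real_def)
  have "eventually (\<lambda>s. dist (g s) L2 < 1) (at_left b)" using l2 by (simp add: tendsto_iff)
  then obtain a2 where a2: "a2 < b" "\<And>s. s > a2 \<Longrightarrow> s < b \<Longrightarrow> \<bar>g s - L2\<bar> < 1"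
    by (auto simp: eventually_at_left_field dist_real_def)
  define \<alpha> where "\<alpha> = min b1 ((a+b)/2)"
  define \<beta> where "\<beta> = max a2 ((a+b)/2)"
  have sub: "{\<alpha>..\<beta>} \<subseteq> {a<..<b}" using ab b1 a2 by (auto simp: \<alpha>_def \<beta>_def min_def max_def split: if_splits)
  have "compact (g ` {\<alpha>..\<beta>})"
    by (rule compact_continuous_image) (use continuous_on_subset[OF cont sub] in auto)
  then obtain K where K: "\<And>x. x \<in> g ` {\<alpha>..\<beta>} \<Longrightarrow> norm x \<le> K"
    using compact_imp_bounded bounded_iff by metis
  show ?thesis
  proof (intro exI ballI)
    fix t assume t: "t \<in> {a<..<b}"
    show "\<bar>g t\<bar> \<le> K + \<bar>L1\<bar> + \<bar>L2\<bar> + 1"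
    proof (cases "t < \<alpha>")
      case True
      hence "\<bar>g t - L1\<bar> < 1" using b1 t by (auto simp: \<alpha>_def)
      moreover have "0 \<le> K" using K[of "g \<alpha>"] sub by (auto simp: \<alpha>_def \<beta>_def)
      ultimately show ?thesis by linarith
    next
      case False
      show ?thesis
      proof (cases "t > \<beta>")
        case True
        hence "\<bar>g t - L2\<bar> < 1" using a2 t by (auto simp: \<beta>_def)
        moreover have "0 \<le> K" using K[of "g \<alpha>"] sub by (auto simp: \<alpha>_def \<beta>_def)
        ultimately show ?thesis by linarith
      next
        case False
        hence "\<bar>g t\<bar> \<le> K" using K[of "g t"] \<open>\<not> t < \<alpha>\<close> by auto
        thus ?thesis by linarith
      qed
    qed
  qed
qed

definition fscale :: "real \<Rightarrow> ('e \<Rightarrow> real \<Rightarrow> real) \<Rightarrow> ('e \<Rightarrow> real \<Rightarrow> real)" where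
  "fscale r f = (\<lambda>e t. r * f e t)"

interpretation FV: vector_space fscale
  by unfold_locales (auto simp: fscale_def fun_eq_iff algebra_simps)

lemma fsum_apply: "(\<Sum>x\<in>S. g x) e t = (\<Sum>x\<in>S. (g x :: 'e \<Rightarrow> real \<Rightarrow> real) e t)"
  by (induction S rule: infinite_finite_induct) auto


lemma circ_lims:
  assumes "circulation V E src tgt h rho B c" "e \<in> E"
  shows "(c e \<longlongrightarrow> lim_src src h c e) (at_right (lo src h e))"
    and "(c e \<longlongrightarrow> lim_tgt tgt h c e) (at_left (hi tgt h e))"
proof -
  from assms obtain L1 L2 where "(c e \<longlongrightarrow> L1) (at_right (lo src h e))" "(c e \<longlongrightarrow> L2) (at_left (hi tgt h e))"
    unfolding circulation_def by blast
  thus "(c e \<longlongrightarrow> lim_src src h c e) (at_right (lo src h e))"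
    and "(c e \<longlongrightarrow> lim_tgt tgt h c e) (at_left (hi tgt h e))"
    unfolding lim_src_def lim_tgt_def by (auto simp: tendsto_Lim)
qed

lemma combo_lims:
  assumes "circulation V E src tgt h rho B a" "circulation V E src tgt h rho B b" "e \<in> E"
  shows "lim_src src h (\<lambda>e t. u * a e t + (1 - u) * b e t) e = u * lim_src src h a e + (1 - u) * lim_src src h b e"
    and "lim_tgt tgt h (\<lambda>e t. u * a e t + (1 - u) * b e t) e = u * lim_tgt tgt h a e + (1 - u) * lim_tgt tgt h b e"
proof -
  note A = circ_lims[OF assms(1,3)] and Bb = circ_lims[OF assms(2,3)]
  show "lim_src src h (\<lambda>e t. u * a e t + (1 - u) * b e t) e = u * lim_src src h a e + (1 - u) * lim_src src h b e"
    unfolding lim_src_def[of _ _ "\<lambda>e t. u * a e t + (1 - u) * b e t"]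
    by (rule tendsto_Lim) (auto intro!: tendsto_intros A(1) Bb(1))
  show "lim_tgt tgt h (\<lambda>e t. u * a e t + (1 - u) * b e t) e = u * lim_tgt tgt h a e + (1 - u) * lim_tgt tgt h b e"
    unfolding lim_tgt_def[of _ _ "\<lambda>e t. u * a e t + (1 - u) * b e t"]
    by (rule tendsto_Lim) (auto intro!: tendsto_intros A(2) Bb(2))
qed

lemma diff_const:
  assumes c: "circulation V E src tgt h rho B c" and cs: "circulation V E src tgt h rho B cs"
    and e: "e \<in> E" and lohi: "lo src h e < hi tgt h e"
    and t: "t \<in> {lo src h e<..<hi tgt h e}"
  shows "c e t = cs e t + (lim_src src h c e - lim_src src h cs e)"
proof -
  let ?F = "at_right (lo src h e)"
  have t1: "((\<lambda>s. c e t - c e s) \<longlongrightarrow> c e t - lim_src src h c e) ?F"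
    by (intro tendsto_intros circ_lims[OF c e])
  have t2: "((\<lambda>s. cs e t - cs e s) \<longlongrightarrow> cs e t - lim_src src h cs e) ?F"
    by (intro tendsto_intros circ_lims[OF cs e])
  have ev: "eventually (\<lambda>s. c e t - c e s = cs e t - cs e s) ?F"
    unfolding eventually_at_right_field
  proof (intro exI[of _ t] conjI allI impI)
    show "t > lo src h e" using t by auto
    fix s assume s: "s > lo src h e" "s < t"
    hence sI: "s \<in> {lo src h e<..<hi tgt h e}" using t by auto
    have "c e t - c e s = integral {s..t} (\<lambda>\<tau>. \<tau> * rho e \<tau>)"
      using c e sI t s unfolding circulation_def by auto
    moreover have "cs e t - cs e s = integral {s..t} (\<lambda>\<tau>. \<tau> * rho e \<tau>)"
      using cs e sI t s unfolding circulation_def by auto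
    ultimately show "c e t - c e s = cs e t - cs e s" by simp
  qed
  have t3: "((\<lambda>s. cs e t - cs e s) \<longlongrightarrow> c e t - lim_src src h c e) ?F"
    using tendsto_cong[OF ev] t1 by simp
  have "c e t - lim_src src h c e = cs e t - lim_src src h cs e"
    using tendsto_unique[OF _ t3 t2] by simp
  thus ?thesis by simp
qed

lemma diff_tgt:
  assumes c: "circulation V E src tgt h rho B c" and cs: "circulation V E src tgt h rho B cs"
    and e: "e \<in> E" and lohi: "lo src h e < hi tgt h e"
  shows "lim_tgt tgt h c e = lim_tgt tgt h cs e + (lim_src src h c e - lim_src src h cs e)"
proof -
  let ?d = "lim_src src h c e - lim_src src h cs e"
  have ev: "eventually (\<lambda>s. cs e s + ?d = c e s) (at_left (hi tgt h e))"
    unfolding eventually_at_left_field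
    using diff_const[OF c cs e lohi] lohi by (intro exI[of _ "lo src h e"]) auto
  have "((\<lambda>s. cs e s + ?d) \<longlongrightarrow> lim_tgt tgt h cs e + ?d) (at_left (hi tgt h e))"
    by (intro tendsto_intros circ_lims[OF cs e])
  hence "(c e \<longlongrightarrow> lim_tgt tgt h cs e + ?d) (at_left (hi tgt h e))"
    using tendsto_cong[OF ev] by simp
  thus ?thesis unfolding lim_tgt_def[of _ _ c] by (rule tendsto_Lim[rotated]) simp
qed




lemma circ_kir:
  assumes "circulation V E src tgt h rho B c" "v \<in> V - B"
  shows "(\<Sum>e\<in>{e \<in> E. tgt e = v}. lim_tgt tgt h c e) = (\<Sum>e\<in>{e \<in> E. src e = v}. lim_src src h c e)"
  using assms unfolding circulation_def by blast
lemma circ_zero: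
  assumes "circulation V E src tgt h rho B c" "\<not> (e \<in> E \<and> t \<in> {lo src h e<..<hi tgt h e})"
  shows "c e t = 0"
  using assms unfolding circulation_def by blast
lemma circ_cont:
  assumes "circulation V E src tgt h rho B c" "e \<in> E"
  shows "continuous_on {lo src h e<..<hi tgt h e} (c e)"
  using assms unfolding circulation_def by blast
lemma src_nonpos:
  assumes rg: "reeb_graph V E src tgt h {}"
    and c: "circulation V E src tgt h rho {} c" and tn: "totally_negative V E src tgt h c"
    and e: "e \<in> E"
  shows "lim_src src h c e \<le> 0"
proof -
  let ?v = "src e"
  have fE: "finite E" and vV: "?v \<in> V" and ut: "univalent E src tgt ?v \<or> trivalent E src tgt ?v"
    using rg e unfolding reeb_graph_def by auto
  show ?thesis
  proof (cases "trivalent E src tgt ?v")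
    case True
    have ea: "e \<in> adj_edges E src tgt ?v" using e by (simp add: adj_edges_def)
    have tn': "\<forall>v\<in>V. trivalent E src tgt v \<longrightarrow> (\<forall>e\<in>adj_edges E src tgt v. lim_at src tgt h c v e < 0)"
      using tn unfolding totally_negative_def .
    have "lim_at src tgt h c ?v e < 0" using tn' vV True ea by simp
    thus ?thesis by (simp add: lim_at_def)
  next
    case False
    hence u: "indeg E tgt ?v + outdeg E src ?v = 1" using ut by (simp add: univalent_def)
    have ein: "e \<in> {e' \<in> E. src e' = ?v}" using e by simp
    have fo: "finite {e' \<in> E. src e' = ?v}" using fE by simp
    have "outdeg E src ?v \<noteq> 0" unfolding outdeg_def using card_0_eq[OF fo] ein by blast
    hence i0: "indeg E tgt ?v = 0" and o1: "outdeg E src ?v = 1" using u by auto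
    have ine: "{e' \<in> E. tgt e' = ?v} = {}" using i0 fE unfolding indeg_def by simp
    have "card {e' \<in> E. src e' = ?v} = 1" using o1 unfolding outdeg_def .
    then obtain x where "{e' \<in> E. src e' = ?v} = {x}" by (rule card_1_singletonE)
    hence oute: "{e' \<in> E. src e' = ?v} = {e}" using ein by simp
    have "(\<Sum>e\<in>{e' \<in> E. tgt e' = ?v}. lim_tgt tgt h c e) = (\<Sum>e\<in>{e' \<in> E. src e' = ?v}. lim_src src h c e)"
      using circ_kir[OF c] vV by simp
    thus ?thesis unfolding ine oute by simp
  qed
qed


lemma tn_bound:
  assumes rg: "reeb_graph V E src tgt h {}"
  shows "\<exists>M. \<forall>c. circulation V E src tgt h rho {} c \<and> totally_negative V E src tgt h c \<longrightarrow> (\<forall>e t. \<bar>c e t\<bar> \<le> M)"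
proof (cases "\<exists>cs. circulation V E src tgt h rho {} cs")
  case False
  thus ?thesis by auto
next
  case True
  then obtain cs where cs: "circulation V E src tgt h rho {} cs" by blast
  have fV: "finite V" and fE: "finite E" and ends: "\<forall>e\<in>E. src e \<in> V \<and> tgt e \<in> V \<and> h (src e) < h (tgt e)"
    using rg unfolding reeb_graph_def by auto
  have lohi: "\<And>e. e \<in> E \<Longrightarrow> lo src h e < hi tgt h e" using ends by (auto simp: lo_def hi_def)
  have "\<forall>e\<in>E. \<exists>B. \<forall>t\<in>{lo src h e<..<hi tgt h e}. \<bar>cs e t\<bar> \<le> B"
  proof
    fix e assume e: "e \<in> E"
    show "\<exists>B. \<forall>t\<in>{lo src h e<..<hi tgt h e}. \<bar>cs e t\<bar> \<le> B"
      by (rule bounded_open_interval[OF lohi[OF e] _ circ_lims[OF cs e]])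
         (rule circ_cont[OF cs e])
  qed
  then obtain Bf where Bf: "\<And>e t. e \<in> E \<Longrightarrow> t \<in> {lo src h e<..<hi tgt h e} \<Longrightarrow> \<bar>cs e t\<bar> \<le> Bf e"
    using bchoice[of E "\<lambda>e B. \<forall>t\<in>{lo src h e<..<hi tgt h e}. \<bar>cs e t\<bar> \<le> B"] by blast
  define U where "U e = - lim_src src h cs e" for e
  define Bs where "Bs = (\<Sum>e\<in>E. \<bar>Bf e\<bar>)"
  define W where "W = (\<Sum>e\<in>E. \<bar>U e\<bar>)"
  have Bs0: "Bs \<ge> 0" and W0: "W \<ge> 0" unfolding Bs_def W_def by (auto intro: sum_nonneg)
  have BfBs: "\<And>e. e \<in> E \<Longrightarrow> \<bar>Bf e\<bar> \<le> Bs" unfolding Bs_def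
    by (rule member_le_sum) (use fE in auto)
  show ?thesis
  proof (intro exI[of _ "Bs + W"] allI impI)
    fix c e0 t0 assume ctn: "circulation V E src tgt h rho {} c \<and> totally_negative V E src tgt h c"
    hence c: "circulation V E src tgt h rho {} c" and tn: "totally_negative V E src tgt h c" by auto
    define d where "d e = lim_src src h c e - lim_src src h cs e" for e
    have ltgt: "\<And>e. e \<in> E \<Longrightarrow> lim_tgt tgt h c e = lim_tgt tgt h cs e + d e"
      unfolding d_def by (rule diff_tgt[OF c cs _ lohi])
    have kir: "\<forall>v\<in>V. (\<Sum>e\<in>{e\<in>E. tgt e = v}. d e) = (\<Sum>e\<in>{e\<in>E. src e = v}. d e)"
    proof
      fix v assume v: "v \<in> V"
      have k1: "(\<Sum>e\<in>{e\<in>E. tgt e = v}. lim_tgt tgt h c e) = (\<Sum>e\<in>{e\<in>E. src e = v}. lim_src src h c e)"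
        using circ_kir[OF c] v by simp
      have k2: "(\<Sum>e\<in>{e\<in>E. tgt e = v}. lim_tgt tgt h cs e) = (\<Sum>e\<in>{e\<in>E. src e = v}. lim_src src h cs e)"
        using circ_kir[OF cs] v by simp
      have "(\<Sum>e\<in>{e\<in>E. tgt e = v}. lim_tgt tgt h c e) = (\<Sum>e\<in>{e\<in>E. tgt e = v}. lim_tgt tgt h cs e + d e)"
        using ltgt by (intro sum.cong) auto
      also have "\<dots> = (\<Sum>e\<in>{e\<in>E. tgt e = v}. lim_tgt tgt h cs e) + (\<Sum>e\<in>{e\<in>E. tgt e = v}. d e)"
        by (rule sum.distrib)
      finally have k3: "(\<Sum>e\<in>{e\<in>E. tgt e = v}. lim_tgt tgt h c e) = (\<Sum>e\<in>{e\<in>E. tgt e = v}. lim_tgt tgt h cs e) + (\<Sum>e\<in>{e\<in>E. tgt e = v}. d e)" .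
      have "(\<Sum>e\<in>{e\<in>E. src e = v}. lim_src src h c e) = (\<Sum>e\<in>{e\<in>E. src e = v}. lim_src src h cs e + d e)"
        by (intro sum.cong) (auto simp: d_def)
      also have "\<dots> = (\<Sum>e\<in>{e\<in>E. src e = v}. lim_src src h cs e) + (\<Sum>e\<in>{e\<in>E. src e = v}. d e)"
        by (rule sum.distrib)
      finally show "(\<Sum>e\<in>{e\<in>E. tgt e = v}. d e) = (\<Sum>e\<in>{e\<in>E. src e = v}. d e)"
        using k1 k2 k3 by linarith
    qed
    have dU: "\<And>e. e \<in> E \<Longrightarrow> d e \<le> U e"
      using src_nonpos[OF rg c tn] by (auto simp: d_def U_def)
    have dW: "\<And>e. e \<in> E \<Longrightarrow> \<bar>d e\<bar> \<le> W"
    proof -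
      fix e0 assume e0: "e0 \<in> E"
      define Cut where "Cut = {e\<in>E. h (src e) < h (tgt e0) \<and> h (tgt e0) \<le> h (tgt e)}"
      have fC: "finite Cut" using fE by (simp add: Cut_def)
      have e0C: "e0 \<in> Cut" using e0 ends by (auto simp: Cut_def)
      have z: "(\<Sum>e\<in>Cut. d e) = 0" unfolding Cut_def by (rule cut_sum_zero[OF fV fE ends kir])
      have "(\<Sum>e\<in>Cut. d e) = d e0 + (\<Sum>e\<in>Cut - {e0}. d e)" by (rule sum.remove[OF fC e0C])
      moreover have "(\<Sum>e\<in>Cut - {e0}. d e) \<le> (\<Sum>e\<in>Cut - {e0}. \<bar>U e\<bar>)"
        by (rule sum_mono) (use dU Cut_def in force)
      moreover have "(\<Sum>e\<in>Cut - {e0}. \<bar>U e\<bar>) \<le> W" unfolding W_def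
        by (rule sum_mono2) (use fE Cut_def in auto)
      moreover have "d e0 \<le> W" using dU[OF e0] member_le_sum[of e0 E "\<lambda>e. \<bar>U e\<bar>"] fE e0
        unfolding W_def by force
      ultimately show "\<bar>d e0\<bar> \<le> W" using z by linarith
    qed
    show "\<bar>c e0 t0\<bar> \<le> Bs + W"
    proof (cases "e0 \<in> E \<and> t0 \<in> {lo src h e0<..<hi tgt h e0}")
      case True
      hence "c e0 t0 = cs e0 t0 + d e0" unfolding d_def using diff_const[OF c cs _ lohi] by blast
      moreover have "\<bar>cs e0 t0\<bar> \<le> Bs" using Bf[of e0 t0] BfBs[of e0] True by linarith
      moreover have "\<bar>d e0\<bar> \<le> W" using dW True by blast
      ultimately show ?thesis by linarith
    next
      case False
      hence "c e0 t0 = 0" using circ_zero[OF c] by blast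
      thus ?thesis using Bs0 W0 by simp
    qed
  qed
qed




lemma fin_dim:
  fixes V :: "'v set" and E :: "'e set" and src tgt :: "'e \<Rightarrow> 'v"
    and h :: "'v \<Rightarrow> real" and rho :: "'e \<Rightarrow> real \<Rightarrow> real"
  assumes rg: "reeb_graph V E src tgt h {}"
  shows "finite_dim_affine {c. circulation V E src tgt h rho {} c}"
proof (cases "\<exists>c0. circulation V E src tgt h rho {} c0")
  case False
  thus ?thesis unfolding finite_dim_affine_def by (intro exI[of _ "{}"]) auto
next
  case True
  let ?A = "{c. circulation V E src tgt h rho {} c}"
  from True obtain c0 where c0: "circulation V E src tgt h rho {} c0" by blast
  have fE: "finite E" and ends: "\<forall>e\<in>E. src e \<in> V \<and> tgt e \<in> V \<and> h (src e) < h (tgt e)"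
    using rg unfolding reeb_graph_def by auto
  have lohi: "\<And>e. e \<in> E \<Longrightarrow> lo src h e < hi tgt h e" using ends by (auto simp: lo_def hi_def)
  define chi :: "'e \<Rightarrow> 'e \<Rightarrow> real \<Rightarrow> real" where
    "chi e = (\<lambda>e' t. if e' = e \<and> t \<in> {lo src h e<..<hi tgt h e} then 1 else 0)" for e
  define m where "m e = (lo src h e + hi tgt h e) / 2" for e
  have mI: "\<And>e. e \<in> E \<Longrightarrow> m e \<in> {lo src h e<..<hi tgt h e}" using lohi by (auto simp: m_def)
  define D where "D = (\<lambda>c. c - c0) ` ?A"
  have DT: "D \<subseteq> FV.span (chi ` E)"
  proof
    fix x assume "x \<in> D"
    then obtain c where c: "circulation V E src tgt h rho {} c" and x: "x = c - c0"
      unfolding D_def by blast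
    have eq: "x = (\<Sum>e\<in>E. fscale (c e (m e) - c0 e (m e)) (chi e))"
    proof (intro ext)
      fix e' t
      show "x e' t = (\<Sum>e\<in>E. fscale (c e (m e) - c0 e (m e)) (chi e)) e' t"
      proof (cases "e' \<in> E \<and> t \<in> {lo src h e'<..<hi tgt h e'}")
        case True
        have "(\<Sum>e\<in>E. fscale (c e (m e) - c0 e (m e)) (chi e)) e' t
              = (\<Sum>e\<in>E. (c e (m e) - c0 e (m e)) * chi e e' t)"
          by (simp add: fsum_apply fscale_def)
        also have "\<dots> = (\<Sum>e\<in>E. if e = e' then c e' (m e') - c0 e' (m e') else 0)"
          using True by (intro sum.cong) (auto simp: chi_def)
        also have "\<dots> = c e' (m e') - c0 e' (m e')" using True fE by simp
        also have "\<dots> = c e' t - c0 e' t"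
          using diff_const[OF c c0 _ lohi, of e' t] diff_const[OF c c0 _ lohi, of e' "m e'"] True mI[of e']
          by simp
        finally show ?thesis by (simp add: x)
      next
        case False
        have "(\<Sum>e\<in>E. fscale (c e (m e) - c0 e (m e)) (chi e)) e' t
              = (\<Sum>e\<in>E. (c e (m e) - c0 e (m e)) * chi e e' t)"
          by (simp add: fsum_apply fscale_def)
        also have "\<dots> = 0"
          using False by (intro sum.neutral) (auto simp: chi_def)
        finally show ?thesis using circ_zero[OF c False] circ_zero[OF c0 False] by (simp add: x)
      qed
    qed
    show "x \<in> FV.span (chi ` E)" unfolding eq
      by (intro FV.span_sum FV.span_scale FV.span_base) auto
  qed
  obtain B where BD: "B \<subseteq> D" and indB: "FV.independent B" and DB: "D \<subseteq> FV.span B"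
    by (rule FV.maximal_independent_subset)
  have fB: "finite B" using FV.independent_span_bound[OF _ indB] BD DT fE by blast
  have B0: "0 \<notin> B" using indB FV.dependent_zero by blast
  define F where "F = insert c0 ((\<lambda>b. c0 + b) ` B)"
  have c0not: "c0 \<notin> (\<lambda>b. c0 + b) ` B" using B0 by auto
  have injB: "inj_on (\<lambda>b. c0 + b) B" by (auto simp: inj_on_def)
  show ?thesis unfolding finite_dim_affine_def
  proof (intro exI[of _ F] conjI ballI)
    show "finite F" using fB by (simp add: F_def)
    show "F \<subseteq> ?A"
    proof
      fix g assume "g \<in> F"
      then consider "g = c0" | b where "b \<in> B" "g = c0 + b" unfolding F_def by blast
      thus "g \<in> ?A"
      proof cases
        case 1 thus ?thesis using c0 by simp
      next
        case 2
        then obtain c where "c \<in> ?A" "b = c - c0" using BD unfolding D_def by blast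
        thus ?thesis using 2 by simp
      qed
    qed
    fix c assume cA: "c \<in> ?A"
    have "c - c0 \<in> FV.span B" using DB cA unfolding D_def by blast
    then obtain u where u: "c - c0 = (\<Sum>b\<in>B. fscale (u b) b)"
      using FV.span_finite[OF fB] by auto
    define w where "w g = (if g = c0 then 1 - sum u B else u (g - c0))" for g
    have sumimg: "\<And>G. (\<Sum>g\<in>(\<lambda>b. c0 + b) ` B. G g) = (\<Sum>b\<in>B. G (c0 + b))"
      by (simp add: sum.reindex[OF injB])
    show "\<exists>w. sum w F = 1 \<and> c = (\<lambda>e t. \<Sum>g\<in>F. w g * g e t)"
    proof (intro exI[of _ w] conjI)
    have "sum w F = w c0 + (\<Sum>g\<in>(\<lambda>b. c0 + b) ` B. w g)"
      unfolding F_def using fB c0not by simp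
    also have "\<dots> = 1 - sum u B + (\<Sum>b\<in>B. u b)"
      unfolding sumimg using B0 by (auto simp: w_def intro!: sum.cong)
    finally show "sum w F = 1" by simp
    show "c = (\<lambda>e t. \<Sum>g\<in>F. w g * g e t)"
    proof (intro ext)
      fix e t
      have "(\<Sum>g\<in>F. w g * g e t) = w c0 * c0 e t + (\<Sum>g\<in>(\<lambda>b. c0 + b) ` B. w g * g e t)"
        unfolding F_def using fB c0not by simp
      also have "\<dots> = (1 - sum u B) * c0 e t + (\<Sum>b\<in>B. u b * (c0 e t + b e t))"
        unfolding sumimg using B0 by (auto simp: w_def intro!: sum.cong)
      also have "\<dots> = c0 e t + (\<Sum>b\<in>B. u b * b e t)"
        by (simp add: algebra_simps sum.distrib sum_distrib_right)
      also have "(\<Sum>b\<in>B. u b * b e t) = (c - c0) e t"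
        unfolding u by (simp add: fsum_apply fscale_def)
      finally show "c e t = (\<Sum>g\<in>F. w g * g e t)" by simp
    qed
    qed
  qed
qed




theorem theorem4p25:
  fixes V :: "'v set" and E :: "'e set" and src tgt :: "'e \<Rightarrow> 'v"
    and h :: "'v \<Rightarrow> real" and rho :: "'e \<Rightarrow> real \<Rightarrow> real"
  assumes "reeb_graph V E src tgt h {}"
    and "log_smooth V E src tgt h rho"
  shows "open_convex_polytope_in
           {c. circulation V E src tgt h rho {} c}
           {c. circulation V E src tgt h rho {} c \<and> totally_negative V E src tgt h c}
       \<and> (\<exists>M. \<forall>c. circulation V E src tgt h rho {} c \<and> totally_negative V E src tgt h c \<longrightarrow>
                  (\<forall>e t. \<bar>c e t\<bar> \<le> M))"
proof -
  note rg = assms(1)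
  have fV: "finite V" and fE: "finite E" using rg unfolding reeb_graph_def by auto
  have bnd: "\<exists>M. \<forall>c. circulation V E src tgt h rho {} c \<and> totally_negative V E src tgt h c \<longrightarrow>
                  (\<forall>e t. \<bar>c e t\<bar> \<le> M)" by (rule tn_bound[OF rg])
  define P where "P = {(v, e). v \<in> V \<and> trivalent E src tgt v \<and> e \<in> adj_edges E src tgt v}"
  define L where "L = (\<lambda>p c. - lim_at src tgt h c (fst p) (snd p)) ` P"
  have fP: "finite P"
    by (rule finite_subset[of _ "V \<times> E"]) (use fV fE in \<open>auto simp: P_def adj_edges_def\<close>)
  have aff: "\<forall>l\<in>L. affine_functional_on {c. circulation V E src tgt h rho {} c} l"
  proof
    fix l assume "l \<in> L"
    then obtain v e where ve: "(v, e) \<in> P" and l: "l = (\<lambda>c. - lim_at src tgt h c v e)"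
      unfolding L_def by auto
    have e: "e \<in> E" using ve by (auto simp: P_def adj_edges_def)
    show "affine_functional_on {c. circulation V E src tgt h rho {} c} l"
      unfolding affine_functional_on_def l
    proof (intro ballI allI)
      fix a b u assume a: "a \<in> {c. circulation V E src tgt h rho {} c}" and b: "b \<in> {c. circulation V E src tgt h rho {} c}"
      show "- lim_at src tgt h (\<lambda>e t. u * a e t + (1 - u) * b e t) v e =
            u * - lim_at src tgt h a v e + (1 - u) * - lim_at src tgt h b v e"
        using combo_lims[of V E src tgt h rho "{}" a b e u] a b e
        by (simp add: lim_at_def algebra_simps)
    qed
  qed
  have Seq: "{c. circulation V E src tgt h rho {} c \<and> totally_negative V E src tgt h c}
      = {c \<in> {c. circulation V E src tgt h rho {} c}. \<forall>l\<in>L. l c > 0}"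
    unfolding L_def P_def totally_negative_def by auto
  have "finite L" using fP by (simp add: L_def)
  show ?thesis unfolding open_convex_polytope_in_def
    using fin_dim[OF rg] aff Seq \<open>finite L\<close> bnd by blast
qed


end
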